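(* Let $n\ge 1$, let $\mathcal{C}$ be a set of conditions, let $\varnothing\notin\mathcal{C}$ denote the null condition, fix $c\in\mathcal{C}$, let $N=2^m$ with $m\ge 1$ an integer, and set $d=1/N$. Let $s:\mathbb{R}^n\times[0,1]\times(\mathcal{C}\cup\{\varnothing\})\times(0,1]\to\mathbb{R}^n$ be any function, and for real $\omega$ define $g^{\omega}(x,t,c,\delta)=\omega\, s(x,t,c,\delta)+(1-\omega)\, s(x,t,\varnothing,\delta)$. Fix $w\in\mathbb{R}$ and points $y_0,\dots,y_N\in\mathbb{R}^n$, and assume that for every $j\in\{0,\dots,m-1\}$ and every index $i\in\{0,\dots,N-1\}$ that is a multiple of $2^{j+1}$, $$s\!\left(y_i,\tfrac{i}{N},c,2^{j+1}d\right)=\tfrac12\Big[g^{w}\!\left(y_i,\tfrac{i}{N},c,2^{j}d\right)+g^{w}\!\left(y_{i+2^j},\tfrac{i+2^j}{N},c,2^{j}d\right)\Big],$$ $$s\!\left(y_i,\tfrac{i}{N},\varnothing,2^{j+1}d\right)=\tfrac12\Big[s\!\left(y_i,\tfrac{i}{N},\varnothing,2^{j}d\right)+s\!\left(y_{i+2^j},\tfrac{i+2^j}{N},\varnothing,2^{j}d\right)\Big].$$ Then for every $j\in\{0,1,\dots,m\}$ and every index $i\in\{0,\dots,N-1\}$ that is a multiple of $2^{j}$: $$s\!\left(y_i,\tfrac{i}{N},\varnothing,2^{j}d\right)=\frac{1}{2^j}\sum_{l=0}^{2^j-1}s\!\left(y_{i+l},\tfrac{i+l}{N},\varnothing,d\right),$$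 and $$g^{w}\!\left(y_i,\tfrac{i}{N},c,2^{j}d\right)=\frac{1}{2^j}\sum_{l=0}^{2^j-1} g^{\,w^{j+1}}\!\left(y_{i+l},\tfrac{i+l}{N},c,d\right).$$
   Context: Here $s$ models a shortcut network (inputs: sample, time, condition or null condition $\varnothing$, step size) and $g^\omega$ its classifier-free-guided output with scale $\omega$, using the convention $g^\omega=\omega s(\cdot,c,\cdot)+(1-\omega)s(\cdot,\varnothing,\cdot)$. The hypotheses express exact self-consistency (zero self-consistency loss) at the given points: a step of size $2\delta$ equals the average of two consecutive steps of size $\delta$, guided with fixed scale $w$ for the conditional branch and unguided for the null-condition branch. In the paper the points are $y_0=x_0$, $y_{i+1}=y_i+s(y_i,i/N,c,d)\,d$. *)

theory Defs
  imports "HOL-Analysis.Analysis"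
begin

text \<open>Shortcut network s x t cond delta, the condition being of type 'c option:
  Some c is a genuine condition, None is the null condition.
  Classifier-free guided output with scale omega.\<close>
definition cfg ::
  "(real^'n \<Rightarrow> real \<Rightarrow> 'c option \<Rightarrow> real \<Rightarrow> real^'n) \<Rightarrow> real \<Rightarrow>
   real^'n \<Rightarrow> real \<Rightarrow> 'c \<Rightarrow> real \<Rightarrow> real^'n" where
  "cfg s \<omega> x t c \<delta> = \<omega> *\<^sub>R s x t (Some c) \<delta> + (1 - \<omega>) *\<^sub>R s x t None \<delta>"

end

theory Submission
  imports Defs
begin

lemma sum_split2: "(\<Sum>l<2*k. f l) = (\<Sum>l<k. f l) + (\<Sum>l<k. f (k+l::nat))"
proof -
  have "(\<Sum>l<k. f (k+l::nat)) = sum f {k..<k+k}"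
    using sum.shift_bounds_nat_ivl[of f 0 k k] by (simp add: atLeast0LessThan add.commute)
  moreover have "sum f {..<k+k} = sum f {..<k} + sum f {k..<k+k}"
    by (simp add: sum.atLeastLessThan_concat flip: atLeast0LessThan)
  ultimately show ?thesis by (simp add: mult_2)
qed

lemma cfg_sum: "(\<Sum>l\<in>A. cfg s a (x l) (t l) c e) =
   a *\<^sub>R (\<Sum>l\<in>A. s (x l) (t l) (Some c) e) + (1 - a) *\<^sub>R (\<Sum>l\<in>A. s (x l) (t l) None e)"
  by (simp add: cfg_def sum.distrib scaleR_sum_right)

lemma alg: fixes a1 a2 b1 b2 :: "real^'n"
  shows "w *\<^sub>R ((1/2) *\<^sub>R (q *\<^sub>R (p *\<^sub>R a1 + (1-p) *\<^sub>R b1) + q *\<^sub>R (p *\<^sub>R a2 + (1-p) *\<^sub>R b2)))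
     + (1 - w) *\<^sub>R ((q/2) *\<^sub>R (b1 + b2)) = (q/2) *\<^sub>R ((w*p) *\<^sub>R (a1 + a2) + (1 - w*p) *\<^sub>R (b1 + b2))"
  by (simp add: vec_eq_iff field_simps)

theorem mainTheorem2:
  fixes s :: "real^'n \<Rightarrow> real \<Rightarrow> 'c option \<Rightarrow> real \<Rightarrow> real^'n"
    and C :: "'c set" and c :: 'c and m N :: nat and d w :: real
    and y :: "nat \<Rightarrow> real^'n"
  assumes "c \<in> C" and "m \<ge> 1" and "N = 2 ^ m" and "d = 1 / real N"
    and hc: "\<And>j i. j < m \<Longrightarrow> i < N \<Longrightarrow> 2 ^ (j + 1) dvd i \<Longrightarrow>
      s (y i) (real i / real N) (Some c) (2 ^ (j + 1) * d) =
        (1 / 2) *\<^sub>R (cfg s w (y i) (real i / real N) c (2 ^ j * d) +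
          cfg s w (y (i + 2 ^ j)) (real (i + 2 ^ j) / real N) c (2 ^ j * d))"
    and hnull: "\<And>j i. j < m \<Longrightarrow> i < N \<Longrightarrow> 2 ^ (j + 1) dvd i \<Longrightarrow>
      s (y i) (real i / real N) None (2 ^ (j + 1) * d) =
        (1 / 2) *\<^sub>R (s (y i) (real i / real N) None (2 ^ j * d) +
          s (y (i + 2 ^ j)) (real (i + 2 ^ j) / real N) None (2 ^ j * d))"
  shows "\<forall>j \<le> m. \<forall>i < N. 2 ^ j dvd i \<longrightarrow>
      s (y i) (real i / real N) None (2 ^ j * d) =
        (1 / 2 ^ j) *\<^sub>R (\<Sum>l < 2 ^ j. s (y (i + l)) (real (i + l) / real N) None d)
    \<and> cfg s w (y i) (real i / real N) c (2 ^ j * d) =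
        (1 / 2 ^ j) *\<^sub>R (\<Sum>l < 2 ^ j. cfg s (w ^ (j + 1)) (y (i + l)) (real (i + l) / real N) c d)"
  proof -
  let ?Sn = "\<lambda>i j. s (y i) (real i / real N) None (2 ^ j * d)"
  let ?Sc = "\<lambda>i j. s (y i) (real i / real N) (Some c) (2 ^ j * d)"
  let ?A = "\<lambda>i k. (\<Sum>l < k. s (y (i + l)) (real (i + l) / real N) (Some c) d)"
  let ?B = "\<lambda>i k. (\<Sum>l < k. s (y (i + l)) (real (i + l) / real N) None d)"
  have main: "j \<le> m \<Longrightarrow> i < N \<Longrightarrow> 2 ^ j dvd i \<Longrightarrow>
      ?Sn i j = (1 / 2 ^ j) *\<^sub>R ?B i (2^j)
    \<and> cfg s w (y i) (real i / real N) c (2 ^ j * d) =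
        (1 / 2 ^ j) *\<^sub>R (w ^ (j+1) *\<^sub>R ?A i (2^j) + (1 - w^(j+1)) *\<^sub>R ?B i (2^j))" for j i
  proof (induction j arbitrary: i)
    case 0
    then show ?case by (simp add: cfg_def)
  next
    case (Suc j)
    have jm: "j < m" using Suc.prems by simp
    have dj: "2 ^ j dvd i" using dvd_trans[OF le_imp_power_dvd[of j "Suc j" "2::nat"] Suc.prems(3)] by simp
    have "2 ^ Suc j dvd (N::nat)" using le_imp_power_dvd[OF Suc.prems(1), of "2::nat"] \<open>N = 2^m\<close> by simp
    then obtain b where b: "N = 2 ^ Suc j * b" by blast
    obtain a where a: "i = 2 ^ Suc j * a" using Suc.prems(3) by blast
    have "a < b" using Suc.prems(2) a b by simp
    then have "a + 1 \<le> b" by simp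
    then have "2 ^ Suc j * (a + 1) \<le> 2 ^ Suc j * b" by (rule mult_left_mono) simp
    then have "i + 2 ^ Suc j \<le> N" using a b by (simp add: algebra_simps)
    moreover have "(0::nat) < 2 ^ j" by simp
    ultimately have i2: "i + 2 ^ j < N" unfolding power_Suc by linarith
    have dj2: "2 ^ j dvd i + 2 ^ j" using dj by simp
    note IH1 = Suc.IH[OF _ Suc.prems(2) dj] 
    note IH2 = Suc.IH[OF _ i2 dj2]
    have jle: "j \<le> m" using jm by simp
    have shB: "?B i (2^Suc j) = ?B i (2^j) + ?B (i + 2^j) (2^j)"
      using sum_split2[of "\<lambda>l. s (y (i + l)) (real (i + l) / real N) None d" "2^j"]
      by (simp add: add.assoc)
    have shA: "?A i (2^Suc j) = ?A i (2^j) + ?A (i + 2^j) (2^j)"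
      using sum_split2[of "\<lambda>l. s (y (i + l)) (real (i + l) / real N) (Some c) d" "2^j"]
      by (simp add: add.assoc)
    have n1: "?Sn i (Suc j) = (1 / 2) *\<^sub>R (?Sn i j + ?Sn (i + 2^j) j)"
      using hnull[OF jm Suc.prems(2)] Suc.prems(3) by simp
    have c1: "?Sc i (Suc j) = (1 / 2) *\<^sub>R (cfg s w (y i) (real i / real N) c (2 ^ j * d) +
          cfg s w (y (i + 2 ^ j)) (real (i + 2 ^ j) / real N) c (2 ^ j * d))"
      using hc[OF jm Suc.prems(2)] Suc.prems(3) by simp
    have N1: "?Sn i (Suc j) = (1 / 2 ^ Suc j) *\<^sub>R ?B i (2^Suc j)"
      unfolding n1 shB using IH1[OF jle] IH2[OF jle]
      by (simp add: scaleR_add_right)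
    have C1: "cfg s w (y i) (real i / real N) c (2 ^ Suc j * d) = w *\<^sub>R ?Sc i (Suc j) + (1 - w) *\<^sub>R ?Sn i (Suc j)"
      by (simp add: cfg_def)
    show ?case
    proof
      show "?Sn i (Suc j) = (1 / 2 ^ Suc j) *\<^sub>R ?B i (2^Suc j)" by (rule N1)
      show "cfg s w (y i) (real i / real N) c (2 ^ Suc j * d) =
        (1 / 2 ^ Suc j) *\<^sub>R (w ^ (Suc j+1) *\<^sub>R ?A i (2^Suc j) + (1 - w^(Suc j+1)) *\<^sub>R ?B i (2^Suc j))"
      proof -
        have G1: "cfg s w (y i) (real i / real N) c (2 ^ j * d) = (1 / 2 ^ j) *\<^sub>R (w ^ (j+1) *\<^sub>R ?A i (2^j) + (1 - w^(j+1)) *\<^sub>R ?B i (2^j))"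
          using IH1[OF jle] by blast
        have G2: "cfg s w (y (i + 2 ^ j)) (real (i + 2 ^ j) / real N) c (2 ^ j * d) = (1 / 2 ^ j) *\<^sub>R (w ^ (j+1) *\<^sub>R ?A (i + 2^j) (2^j) + (1 - w^(j+1)) *\<^sub>R ?B (i + 2^j) (2^j))"
          using IH2[OF jle] by blast
        have q: "(1::real) / 2 ^ Suc j = (1 / 2 ^ j) / 2" by simp
        show ?thesis
          unfolding C1 c1 N1 shA shB G1 G2 q
          using alg[of w "1 / 2 ^ j" "w^(j+1)" "?A i (2^j)" "?B i (2^j)" "?A (i + 2^j) (2^j)" "?B (i + 2^j) (2^j)"]
          by (simp add: mult.assoc)
      qed
    qed
  qed
  show ?thesis
  proof (intro allI impI)
    fix j i assume "j \<le> m" "i < N" "2 ^ j dvd i"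
    from main[OF this] show "?Sn i j = (1 / 2 ^ j) *\<^sub>R ?B i (2^j) \<and>
       cfg s w (y i) (real i / real N) c (2 ^ j * d) =
        (1 / 2 ^ j) *\<^sub>R (\<Sum>l < 2 ^ j. cfg s (w ^ (j + 1)) (y (i + l)) (real (i + l) / real N) c d)"
      by (simp add: cfg_sum)
  qed
qed

end
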